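(* Let $X$ be a uniform space equipped with a uniformly continuous action of a group $\Gamma$. Let $Y$ be a closed subset of $X$. Suppose that there is a net $(Z_i)_{i \in I}$ of $\Gamma$-invariant subsets of $X$ converging to $Y$ in the Hausdorff-Bourbaki topology. Then $Y$ is $\Gamma$-invariant.
   Context: An action of $\Gamma$ on $X$ is uniformly continuous if each map $x \mapsto \gamma x$, $\gamma \in \Gamma$, is uniformly continuous. For $V \subset X \times X$ and $A \subset X$, $V[A] = \{x \in X : (x,a) \in V \text{ for some } a \in A\}$. The Hausdorff-Bourbaki uniform structure on the set $\mathcal{P}(X)$ of all subsets of $X$ has as a base the sets $\widehat{V} = \{(A,B) : B \subset V[A] \text{ and } A \subset V[B]\}$, $V$ an entourage of $X$; the Hausdorff-Bourbaki topology is its associated topology. *)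

theory Defs
  imports "HOL-Analysis.Analysis" "HOL-Algebra.Group_Action"
begin

definition entourage :: "('a::uniform_space \<times> 'a) set \<Rightarrow> bool" where
  "entourage V \<longleftrightarrow> eventually (\<lambda>p. p \<in> V) uniformity"

definition ent_image :: "('a \<times> 'a) set \<Rightarrow> 'a set \<Rightarrow> 'a set" where
  "ent_image V A = {x. \<exists>a\<in>A. (x, a) \<in> V}"

definition HB_ent :: "('a \<times> 'a) set \<Rightarrow> ('a set \<times> 'a set) set" where
  "HB_ent V = {(A, B). B \<subseteq> ent_image V A \<and> A \<subseteq> ent_image V B}"

definition directed_set :: "'i set \<Rightarrow> ('i \<Rightarrow> 'i \<Rightarrow> bool) \<Rightarrow> bool" where
  "directed_set I ord_rel \<longleftrightarrow> I \<noteq> {} \<and> (\<forall>i\<in>I. ord_rel i i)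
     \<and> (\<forall>i\<in>I. \<forall>j\<in>I. \<forall>k\<in>I. ord_rel i j \<longrightarrow> ord_rel j k \<longrightarrow> ord_rel i k)
     \<and> (\<forall>i\<in>I. \<forall>j\<in>I. \<exists>k\<in>I. ord_rel i k \<and> ord_rel j k)"

definition HB_net_converges ::
    "'i set \<Rightarrow> ('i \<Rightarrow> 'i \<Rightarrow> bool) \<Rightarrow> ('i \<Rightarrow> 'a::uniform_space set) \<Rightarrow> 'a set \<Rightarrow> bool" where
  "HB_net_converges I ord_rel Z Y \<longleftrightarrow>
     (\<forall>V. entourage V \<longrightarrow> (\<exists>i0\<in>I. \<forall>i\<in>I. ord_rel i0 i \<longrightarrow> (Y, Z i) \<in> HB_ent V))"

definition invariant_set :: "('g, 'b) monoid_scheme \<Rightarrow> ('g \<Rightarrow> 'a \<Rightarrow> 'a) \<Rightarrow> 'a set \<Rightarrow> bool" where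
  "invariant_set G \<phi> Z \<longleftrightarrow> (\<forall>g\<in>carrier G. \<phi> g ` Z \<subseteq> Z)"

end

theory Submission
  imports Defs
begin

theorem corollary3p7:
  fixes G :: "('g, 'b) monoid_scheme"
    and \<phi> :: "'g \<Rightarrow> 'a::uniform_space \<Rightarrow> 'a"
    and Y :: "'a set"
    and I :: "'i set" and ord_rel :: "'i \<Rightarrow> 'i \<Rightarrow> bool"
    and Z :: "'i \<Rightarrow> 'a set"
  assumes "group_action G UNIV \<phi>"
    and "\<forall>g\<in>carrier G. uniformly_continuous_on UNIV (\<phi> g)"
    and "closed Y"
    and "directed_set I ord_rel"
    and "\<forall>i\<in>I. invariant_set G \<phi> (Z i)"
    and "HB_net_converges I ord_rel Z Y"
  shows "invariant_set G \<phi> Y"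
  unfolding invariant_set_def
proof (intro ballI subsetI)
  fix g p assume g: "g \<in> carrier G" and "p \<in> \<phi> g ` Y"
  then obtain y where y: "y \<in> Y" and p: "p = \<phi> g y" by auto
  show "p \<in> Y"
  proof (rule ccontr)
    assume "p \<notin> Y"
    have "open (- Y)" using assms(3) by auto
    hence "eventually (\<lambda>(x', y). x' = p \<longrightarrow> y \<in> - Y) uniformity"
      using \<open>p \<notin> Y\<close> open_uniformity by blast
    then obtain D where D: "eventually D uniformity"
      and Dt: "\<And>x y z. D (x, y) \<Longrightarrow> D (y, z) \<Longrightarrow> (\<lambda>(x', y). x' = p \<longrightarrow> y \<in> - Y) (x, z)"
      by (metis uniformity_transE)
    have uc: "filterlim (\<lambda>(x, y). (\<phi> g x, \<phi> g y)) uniformity uniformity"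
      using assms(2) g unfolding uniformly_continuous_on_uniformity by simp
    have ev1: "eventually (\<lambda>(a, b). D (\<phi> g a, \<phi> g b)) uniformity"
      using filterlim_iff[THEN iffD1, OF uc, rule_format, OF D]
      by (simp add: case_prod_unfold)
    define V where "V = {q. (\<lambda>(a, b). D (\<phi> g a, \<phi> g b)) q \<and> D q}"
    have "entourage V" unfolding entourage_def V_def
      using eventually_conj[OF ev1 D] by simp
    then obtain i0 where "i0 \<in> I" and h: "\<forall>i\<in>I. ord_rel i0 i \<longrightarrow> (Y, Z i) \<in> HB_ent V"
      using assms(6) unfolding HB_net_converges_def by blast
    have "ord_rel i0 i0" using assms(4) \<open>i0 \<in> I\<close> unfolding directed_set_def by blast
    hence hb: "(Y, Z i0) \<in> HB_ent V" using h \<open>i0 \<in> I\<close> by blast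
    then obtain z where z: "z \<in> Z i0" "(y, z) \<in> V"
      using y unfolding HB_ent_def ent_image_def by blast
    have "\<phi> g z \<in> Z i0" using assms(5) \<open>i0 \<in> I\<close> g z(1) unfolding invariant_set_def by blast
    then obtain y' where y': "y' \<in> Y" "(\<phi> g z, y') \<in> V"
      using hb unfolding HB_ent_def ent_image_def by blast
    have "D (p, \<phi> g z)" using z(2) p unfolding V_def by simp
    moreover have "D (\<phi> g z, y')" using y'(2) unfolding V_def by simp
    ultimately have "y' \<in> - Y" using Dt by fastforce
    with y' show False by simp
  qed
qed

end
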